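(* Let $(\Psi_d)_d$ be a constraint structure that is both a meet and a lift constraint structure, let $(\le,\wedge,P)$ be a decent triple on it, and let $(R^d)_d$ be a constraint-refining predicate that relates to a constraint-producing predicate $(\models^d)_d$. If $\vdash^{d}\Gamma\to\sigma'$ is derivable in DI, then for every $\sigma\in\Psi_d$ such that $P(\sigma\wedge\sigma')$, there exists $\sigma''\in\Psi_d$ such that $\sigma''\simeq\sigma\wedge\sigma'$ and $\sigma\to\vdash^{d}\Gamma\to\sigma''$ is derivable in SDI.
   Context: Formulas are first-order formulas in negation normal form, built from literals using $\wedge,\vee,\forall,\exists$. Eigenvariables (written $\bar x$) and meta-variables (written $X$) are two disjoint infinite supplies of variables. Domains: there is an initial domain $d_0$; for a domain $d$ and an eigenvariable $\bar x$ (resp. meta-variable $X$) not declared in $d$, $d;\bar x$ (resp. $d;X$) is a domain declaring additionally $\bar x$ (resp. $X$); all domains arise this way. A formula of domain $d$ is one whose free variables are eigenvariables or meta-variables declared in $d$; a context of domain $d$ is a finite multiset of formulas of domain $d$; $\Gamma_{lit}$ is the set of literals that are elements of $\Gamma$. A constraint structure consists of a set $\Psi_d$ for each domain $d$, with $\Psi_{d;\bar x}=\Psi_d$, and projection maps $\Psi_{d;X}\to\Psi_d$, $\sigma\mapsto\sigma_\downarrow$; a meet constraint structure additionally has a binary operation $\wedge$ on each $\Psi_d$; a lift constraint structure additionally has maps $\Psi_d\to\Psi_{d;X}$, $\sigma\mapsto\sigma^\uparrow$. A triple $(\le,\wedge,P)$, where $\le$ is a family of preorders on the $\Psi_d$,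 $\wedge$ the meet operations, and $P$ a family of predicates on the $\Psi_d$, is decent if, writing $\simeq$ for the equivalence relation generated by $\le$: (D1) for all $\sigma,\sigma'\in\Psi_d$, $\sigma\wedge\sigma'$ is a greatest lower bound of $\sigma,\sigma'$ for $\le$; (D2) for all $\sigma\in\Psi_d$ and $\sigma',\sigma''\in\Psi_{d;X}$, $\sigma''\simeq\sigma^\uparrow\wedge\sigma'$ implies $\sigma''_\downarrow\simeq\sigma\wedge\sigma'_\downarrow$; (P1) for all $\sigma\in\Psi_{d;X}$, $P(\sigma)\iff P(\sigma_\downarrow)$; (P2) for all $\sigma,\sigma'\in\Psi_d$, $P(\sigma)$ and $\sigma\le\sigma'$ imply $P(\sigma')$. A constraint-producing predicate is a family of relations $\mathcal A\models^d\sigma$ between sets $\mathcal A$ of literals of domain $d$ and $\sigma\in\Psi_d$. A constraint-refining predicate is a family of relations $R^d(\sigma,\mathcal A,\sigma')$ between sets $\mathcal A$ of literals of domain $d$ and pairs $\sigma,\sigma'\in\Psi_d$. It relates to $(\models^d)_d$ if for all $d$, all sets $\mathcal A$ of literals of domain $d$ and all $\sigma\in\Psi_d$: (A1) for all $\sigma'\in\Psi_d$, $R^d(\sigma,\mathcal A,\sigma')$ implies there is $\sigma''\in\Psi_d$ with $\sigma'\simeq\sigma\wedge\sigma''$, $P(\sigma\wedge\sigma'')$ and $\mathcal A\models^d\sigma''$; (A2) for all $\sigma'\in\Psi_d$, if $P(\sigma\wedge\sigma')$ and $\mathcal A\models^d\sigma'$ then there is $\sigma''\in\Psi_d$ with $\sigma''\simeq\sigma\wedge\sigma'$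 and $R^d(\sigma,\mathcal A,\sigma'')$. System DI derives $\vdash^d\Gamma\to\sigma$ ($\Gamma$, $\sigma$ of domain $d$) by: $\vdash^d\Gamma\to\sigma$ if $\Gamma_{lit}\models^d\sigma$; from $\vdash^d\Gamma,A\to\sigma$ and $\vdash^d\Gamma,B\to\sigma'$ infer $\vdash^d\Gamma,A\wedge B\to\sigma\wedge\sigma'$; from $\vdash^d\Gamma,A,B\to\sigma$ infer $\vdash^d\Gamma,A\vee B\to\sigma$; from $\vdash^{d;X}\Gamma,A[x:=X],\exists xA\to\sigma$ ($X$ fresh meta-variable) infer $\vdash^d\Gamma,\exists xA\to\sigma_\downarrow$; from $\vdash^{d;\bar x}\Gamma,A[x:=\bar x]\to\sigma$ ($\bar x$ fresh eigenvariable) infer $\vdash^d\Gamma,\forall xA\to\sigma$. System SDI derives $\sigma\to\vdash^d\Gamma\to\sigma'$ ($\Gamma,\sigma,\sigma'$ of domain $d$) by: $\sigma\to\vdash^d\Gamma\to\sigma'$ if $R^d(\sigma,\Gamma_{lit},\sigma')$; from $\sigma\to\vdash^d\Gamma,A,B\to\sigma'$ infer $\sigma\to\vdash^d\Gamma,A\vee B\to\sigma'$; for $i\in\{0,1\}$, from $\sigma\to\vdash^d\Gamma,A_i\to\sigma''$ and $\sigma''\to\vdash^d\Gamma,A_{1-i}\to\sigma'$ infer $\sigma\to\vdash^d\Gamma,A_0\wedge A_1\to\sigma'$; from $\sigma^\uparrow\to\vdash^{d;X}\Gamma,A[x:=X],\exists xA\to\sigma'$ ($X$ fresh meta-variable)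 infer $\sigma\to\vdash^d\Gamma,\exists xA\to\sigma'_\downarrow$; from $\sigma\to\vdash^{d;\bar x}\Gamma,A[x:=\bar x]\to\sigma'$ ($\bar x$ fresh eigenvariable) infer $\sigma\to\vdash^d\Gamma,\forall xA\to\sigma'$. *)

theory Defs
  imports Main "HOL-Library.Multiset"
begin

text \<open>Three disjoint supplies of variables: ordinary (bindable) variables,
  eigenvariables and meta-variables.\<close>
datatype 'f trm = Var nat | EVar nat | MVar nat | App 'f "'f trm list"

text \<open>Literals: an atom (polarity True) or a negated atom (polarity False).\<close>
datatype ('f, 'p) lit = Atom bool 'p "'f trm list"

datatype ('f, 'p) fm =
    L "('f, 'p) lit"
  | Conj "('f, 'p) fm" "('f, 'p) fm"
  | Disj "('f, 'p) fm" "('f, 'p) fm"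
  | Forall nat "('f, 'p) fm"
  | Exists nat "('f, 'p) fm"

fun subst_trm :: "nat \<Rightarrow> 'f trm \<Rightarrow> 'f trm \<Rightarrow> 'f trm" where
  "subst_trm x t (Var y) = (if y = x then t else Var y)"
| "subst_trm x t (EVar y) = EVar y"
| "subst_trm x t (MVar y) = MVar y"
| "subst_trm x t (App f ts) = App f (map (subst_trm x t) ts)"

fun subst_lit :: "nat \<Rightarrow> 'f trm \<Rightarrow> ('f, 'p) lit \<Rightarrow> ('f, 'p) lit" where
  "subst_lit x t (Atom b p ts) = Atom b p (map (subst_trm x t) ts)"

text \<open>\<open>subst_fm x t A\<close> is \<open>A[x:=t]\<close>. Only eigen-/meta-variables are substituted,
  which are never bound, so no capture can occur.\<close>
fun subst_fm :: "nat \<Rightarrow> 'f trm \<Rightarrow> ('f, 'p) fm \<Rightarrow> ('f, 'p) fm" where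
  "subst_fm x t (L l) = L (subst_lit x t l)"
| "subst_fm x t (Conj A B) = Conj (subst_fm x t A) (subst_fm x t B)"
| "subst_fm x t (Disj A B) = Disj (subst_fm x t A) (subst_fm x t B)"
| "subst_fm x t (Forall y A) = (if y = x then Forall y A else Forall y (subst_fm x t A))"
| "subst_fm x t (Exists y A) = (if y = x then Exists y A else Exists y (subst_fm x t A))"

fun vars_trm :: "'f trm \<Rightarrow> nat set" and evars_trm :: "'f trm \<Rightarrow> nat set"
  and mvars_trm :: "'f trm \<Rightarrow> nat set" where
  "vars_trm (Var y) = {y}" | "vars_trm (EVar y) = {}" | "vars_trm (MVar y) = {}"
| "vars_trm (App f ts) = (\<Union>t\<in>set ts. vars_trm t)"
| "evars_trm (Var y) = {}" | "evars_trm (EVar y) = {y}" | "evars_trm (MVar y) = {}"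
| "evars_trm (App f ts) = (\<Union>t\<in>set ts. evars_trm t)"
| "mvars_trm (Var y) = {}" | "mvars_trm (EVar y) = {}" | "mvars_trm (MVar y) = {y}"
| "mvars_trm (App f ts) = (\<Union>t\<in>set ts. mvars_trm t)"

fun lit_args :: "('f, 'p) lit \<Rightarrow> 'f trm list" where
  "lit_args (Atom b p ts) = ts"

fun fvars :: "('f, 'p) fm \<Rightarrow> nat set" where
  "fvars (L l) = (\<Union>t\<in>set (lit_args l). vars_trm t)"
| "fvars (Conj A B) = fvars A \<union> fvars B"
| "fvars (Disj A B) = fvars A \<union> fvars B"
| "fvars (Forall y A) = fvars A - {y}"
| "fvars (Exists y A) = fvars A - {y}"

fun fevars :: "('f, 'p) fm \<Rightarrow> nat set" where
  "fevars (L l) = (\<Union>t\<in>set (lit_args l). evars_trm t)"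
| "fevars (Conj A B) = fevars A \<union> fevars B"
| "fevars (Disj A B) = fevars A \<union> fevars B"
| "fevars (Forall y A) = fevars A"
| "fevars (Exists y A) = fevars A"

fun fmvars :: "('f, 'p) fm \<Rightarrow> nat set" where
  "fmvars (L l) = (\<Union>t\<in>set (lit_args l). mvars_trm t)"
| "fmvars (Conj A B) = fmvars A \<union> fmvars B"
| "fmvars (Disj A B) = fmvars A \<union> fmvars B"
| "fmvars (Forall y A) = fmvars A"
| "fmvars (Exists y A) = fmvars A"

text \<open>A domain is the list of its declarations (latest first); the initial domain
  \<open>d\<^sub>0\<close> is the empty list, \<open>d;x\<close> is \<open>DE x # d\<close> and \<open>d;X\<close> is \<open>DM X # d\<close>.\<close>
datatype decl = DE nat | DM nat

definition is_dom :: "decl list \<Rightarrow> bool" where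
  "is_dom d \<longleftrightarrow> distinct d"

definition fm_dom :: "decl list \<Rightarrow> ('f, 'p) fm \<Rightarrow> bool" where
  "fm_dom d A \<longleftrightarrow> fvars A = {} \<and> (\<forall>x\<in>fevars A. DE x \<in> set d) \<and> (\<forall>X\<in>fmvars A. DM X \<in> set d)"

definition ctx_dom :: "decl list \<Rightarrow> ('f, 'p) fm multiset \<Rightarrow> bool" where
  "ctx_dom d \<Gamma> \<longleftrightarrow> (\<forall>A\<in>#\<Gamma>. fm_dom d A)"

definition lits :: "('f, 'p) fm multiset \<Rightarrow> ('f, 'p) lit set" where
  "lits \<Gamma> = {l. L l \<in># \<Gamma>}"

text \<open>\<open>Psi d\<close> is \<open>\<Psi>\<^sub>d\<close>; \<open>proj d X\<close> is the projection \<open>\<Psi>\<^bsub>d;X\<^esub> \<rightarrow> \<Psi>\<^sub>d\<close>.\<close>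
definition constraint_structure ::
  "(decl list \<Rightarrow> 'c set) \<Rightarrow> (decl list \<Rightarrow> nat \<Rightarrow> 'c \<Rightarrow> 'c) \<Rightarrow> bool" where
  "constraint_structure Psi proj \<longleftrightarrow>
     (\<forall>d x. is_dom d \<and> DE x \<notin> set d \<longrightarrow> Psi (DE x # d) = Psi d) \<and>
     (\<forall>d X \<sigma>. is_dom d \<and> DM X \<notin> set d \<and> \<sigma> \<in> Psi (DM X # d) \<longrightarrow> proj d X \<sigma> \<in> Psi d)"

text \<open>A binary operation on each set \<open>\<Psi>\<^sub>d\<close>; since \<open>\<Psi>\<^bsub>d;x\<^esub> = \<Psi>\<^sub>d\<close> is the same set,
  the operation on it is the same one.\<close>
definition meet_structure ::
  "(decl list \<Rightarrow> 'c set) \<Rightarrow> (decl list \<Rightarrow> nat \<Rightarrow> 'c \<Rightarrow> 'c) \<Rightarrow> (decl list \<Rightarrow> 'c \<Rightarrow> 'c \<Rightarrow> 'c) \<Rightarrow> bool" where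
  "meet_structure Psi proj meet \<longleftrightarrow> constraint_structure Psi proj \<and>
     (\<forall>d \<sigma> \<sigma>'. is_dom d \<and> \<sigma> \<in> Psi d \<and> \<sigma>' \<in> Psi d \<longrightarrow> meet d \<sigma> \<sigma>' \<in> Psi d) \<and>
     (\<forall>d x. is_dom d \<and> DE x \<notin> set d \<longrightarrow> (\<forall>\<sigma>\<in>Psi d. \<forall>\<sigma>'\<in>Psi d. meet (DE x # d) \<sigma> \<sigma>' = meet d \<sigma> \<sigma>'))"

definition lift_structure ::
  "(decl list \<Rightarrow> 'c set) \<Rightarrow> (decl list \<Rightarrow> nat \<Rightarrow> 'c \<Rightarrow> 'c) \<Rightarrow> (decl list \<Rightarrow> nat \<Rightarrow> 'c \<Rightarrow> 'c) \<Rightarrow> bool" where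
  "lift_structure Psi proj lift \<longleftrightarrow> constraint_structure Psi proj \<and>
     (\<forall>d X \<sigma>. is_dom d \<and> DM X \<notin> set d \<and> \<sigma> \<in> Psi d \<longrightarrow> lift d X \<sigma> \<in> Psi (DM X # d))"

definition ceq :: "(decl list \<Rightarrow> 'c \<Rightarrow> 'c \<Rightarrow> bool) \<Rightarrow> decl list \<Rightarrow> 'c \<Rightarrow> 'c \<Rightarrow> bool" where
  "ceq le d \<sigma> \<sigma>' \<longleftrightarrow> le d \<sigma> \<sigma>' \<and> le d \<sigma>' \<sigma>"

definition decent ::
  "(decl list \<Rightarrow> 'c set) \<Rightarrow> (decl list \<Rightarrow> nat \<Rightarrow> 'c \<Rightarrow> 'c) \<Rightarrow> (decl list \<Rightarrow> 'c \<Rightarrow> 'c \<Rightarrow> 'c) \<Rightarrow>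
   (decl list \<Rightarrow> nat \<Rightarrow> 'c \<Rightarrow> 'c) \<Rightarrow> (decl list \<Rightarrow> 'c \<Rightarrow> 'c \<Rightarrow> bool) \<Rightarrow> (decl list \<Rightarrow> 'c \<Rightarrow> bool) \<Rightarrow> bool" where
  "decent Psi proj meet lift le P \<longleftrightarrow>
     \<comment> \<open>each \<open>le d\<close> is a preorder on \<open>\<Psi>\<^sub>d\<close>\<close>
     (\<forall>d. is_dom d \<longrightarrow> (\<forall>\<sigma>\<in>Psi d. le d \<sigma> \<sigma>) \<and>
        (\<forall>\<sigma>\<in>Psi d. \<forall>\<sigma>'\<in>Psi d. \<forall>\<sigma>''\<in>Psi d. le d \<sigma> \<sigma>' \<and> le d \<sigma>' \<sigma>'' \<longrightarrow> le d \<sigma> \<sigma>'')) \<and>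
     \<comment> \<open>\<open>\<Psi>\<^bsub>d;x\<^esub> = \<Psi>\<^sub>d\<close> carries the same preorder and predicate\<close>
     (\<forall>d x. is_dom d \<and> DE x \<notin> set d \<longrightarrow>
        (\<forall>\<sigma>\<in>Psi d. \<forall>\<sigma>'\<in>Psi d. le (DE x # d) \<sigma> \<sigma>' = le d \<sigma> \<sigma>') \<and>
        (\<forall>\<sigma>\<in>Psi d. P (DE x # d) \<sigma> = P d \<sigma>)) \<and>
     \<comment> \<open>(D1)\<close>
     (\<forall>d. is_dom d \<longrightarrow> (\<forall>\<sigma>\<in>Psi d. \<forall>\<sigma>'\<in>Psi d.
        le d (meet d \<sigma> \<sigma>') \<sigma> \<and> le d (meet d \<sigma> \<sigma>') \<sigma>' \<and>
        (\<forall>\<tau>\<in>Psi d. le d \<tau> \<sigma> \<and> le d \<tau> \<sigma>' \<longrightarrow> le d \<tau> (meet d \<sigma> \<sigma>')))) \<and>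
     \<comment> \<open>(D2)\<close>
     (\<forall>d X. is_dom d \<and> DM X \<notin> set d \<longrightarrow> (\<forall>\<sigma>\<in>Psi d. \<forall>\<sigma>'\<in>Psi (DM X # d). \<forall>\<sigma>''\<in>Psi (DM X # d).
        ceq le (DM X # d) \<sigma>'' (meet (DM X # d) (lift d X \<sigma>) \<sigma>') \<longrightarrow>
        ceq le d (proj d X \<sigma>'') (meet d \<sigma> (proj d X \<sigma>')))) \<and>
     \<comment> \<open>(P1)\<close>
     (\<forall>d X. is_dom d \<and> DM X \<notin> set d \<longrightarrow> (\<forall>\<sigma>\<in>Psi (DM X # d). P (DM X # d) \<sigma> \<longleftrightarrow> P d (proj d X \<sigma>))) \<and>
     \<comment> \<open>(P2)\<close>
     (\<forall>d. is_dom d \<longrightarrow> (\<forall>\<sigma>\<in>Psi d. \<forall>\<sigma>'\<in>Psi d. P d \<sigma> \<and> le d \<sigma> \<sigma>' \<longrightarrow> P d \<sigma>'))"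

definition lits_dom :: "decl list \<Rightarrow> ('f, 'p) lit set \<Rightarrow> bool" where
  "lits_dom d \<A> \<longleftrightarrow> (\<forall>l\<in>\<A>. fm_dom d (L l))"

text \<open>\<open>R d \<sigma> \<A> \<sigma>'\<close> is \<open>R\<^sup>d(\<sigma>,\<A>,\<sigma>')\<close>; \<open>models d \<A> \<sigma>\<close> is \<open>\<A> \<Turnstile>\<^sup>d \<sigma>\<close>.\<close>
definition relates ::
  "(decl list \<Rightarrow> 'c set) \<Rightarrow> (decl list \<Rightarrow> 'c \<Rightarrow> 'c \<Rightarrow> 'c) \<Rightarrow> (decl list \<Rightarrow> 'c \<Rightarrow> 'c \<Rightarrow> bool) \<Rightarrow>
   (decl list \<Rightarrow> 'c \<Rightarrow> bool) \<Rightarrow> (decl list \<Rightarrow> 'c \<Rightarrow> ('f, 'p) lit set \<Rightarrow> 'c \<Rightarrow> bool) \<Rightarrow>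
   (decl list \<Rightarrow> ('f, 'p) lit set \<Rightarrow> 'c \<Rightarrow> bool) \<Rightarrow> bool" where
  "relates Psi meet le P R models \<longleftrightarrow>
     (\<forall>d \<A> \<sigma>. is_dom d \<and> lits_dom d \<A> \<and> \<sigma> \<in> Psi d \<longrightarrow>
        \<comment> \<open>(A1)\<close>
        (\<forall>\<sigma>'\<in>Psi d. R d \<sigma> \<A> \<sigma>' \<longrightarrow>
           (\<exists>\<sigma>''\<in>Psi d. ceq le d \<sigma>' (meet d \<sigma> \<sigma>'') \<and> P d (meet d \<sigma> \<sigma>'') \<and> models d \<A> \<sigma>'')) \<and>
        \<comment> \<open>(A2)\<close>
        (\<forall>\<sigma>'\<in>Psi d. P d (meet d \<sigma> \<sigma>') \<and> models d \<A> \<sigma>' \<longrightarrow>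
           (\<exists>\<sigma>''\<in>Psi d. ceq le d \<sigma>'' (meet d \<sigma> \<sigma>') \<and> R d \<sigma> \<A> \<sigma>'')))"

text \<open>\<open>DI \<dots> d \<Gamma> \<sigma>\<close> is \<open>\<turnstile>\<^sup>d \<Gamma> \<rightarrow> \<sigma>\<close>.\<close>
inductive DI for Psi :: "decl list \<Rightarrow> 'c set" and proj :: "decl list \<Rightarrow> nat \<Rightarrow> 'c \<Rightarrow> 'c"
  and meet :: "decl list \<Rightarrow> 'c \<Rightarrow> 'c \<Rightarrow> 'c"
  and models :: "decl list \<Rightarrow> ('f, 'p) lit set \<Rightarrow> 'c \<Rightarrow> bool" where
  DI_ax: "\<lbrakk>is_dom d; ctx_dom d \<Gamma>; \<sigma> \<in> Psi d; models d (lits \<Gamma>) \<sigma>\<rbrakk>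
    \<Longrightarrow> DI Psi proj meet models d \<Gamma> \<sigma>"
| DI_conj: "\<lbrakk>DI Psi proj meet models d (\<Gamma> + {#A#}) \<sigma>; DI Psi proj meet models d (\<Gamma> + {#B#}) \<sigma>'\<rbrakk>
    \<Longrightarrow> DI Psi proj meet models d (\<Gamma> + {#Conj A B#}) (meet d \<sigma> \<sigma>')"
| DI_disj: "DI Psi proj meet models d (\<Gamma> + {#A, B#}) \<sigma>
    \<Longrightarrow> DI Psi proj meet models d (\<Gamma> + {#Disj A B#}) \<sigma>"
| DI_ex: "\<lbrakk>is_dom d; DM X \<notin> set d; ctx_dom d (\<Gamma> + {#Exists x A#});
    DI Psi proj meet models (DM X # d) (\<Gamma> + {#subst_fm x (MVar X) A, Exists x A#}) \<sigma>\<rbrakk>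
    \<Longrightarrow> DI Psi proj meet models d (\<Gamma> + {#Exists x A#}) (proj d X \<sigma>)"
| DI_all: "\<lbrakk>is_dom d; DE y \<notin> set d; ctx_dom d (\<Gamma> + {#Forall x A#});
    DI Psi proj meet models (DE y # d) (\<Gamma> + {#subst_fm x (EVar y) A#}) \<sigma>\<rbrakk>
    \<Longrightarrow> DI Psi proj meet models d (\<Gamma> + {#Forall x A#}) \<sigma>"

text \<open>\<open>SDI \<dots> d \<sigma> \<Gamma> \<sigma>'\<close> is \<open>\<sigma> \<rightarrow> \<turnstile>\<^sup>d \<Gamma> \<rightarrow> \<sigma>'\<close>.\<close>
inductive SDI for Psi :: "decl list \<Rightarrow> 'c set" and proj :: "decl list \<Rightarrow> nat \<Rightarrow> 'c \<Rightarrow> 'c"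
  and lift :: "decl list \<Rightarrow> nat \<Rightarrow> 'c \<Rightarrow> 'c"
  and R :: "decl list \<Rightarrow> 'c \<Rightarrow> ('f, 'p) lit set \<Rightarrow> 'c \<Rightarrow> bool" where
  SDI_ax: "\<lbrakk>is_dom d; ctx_dom d \<Gamma>; \<sigma> \<in> Psi d; \<sigma>' \<in> Psi d; R d \<sigma> (lits \<Gamma>) \<sigma>'\<rbrakk>
    \<Longrightarrow> SDI Psi proj lift R d \<sigma> \<Gamma> \<sigma>'"
| SDI_disj: "SDI Psi proj lift R d \<sigma> (\<Gamma> + {#A, B#}) \<sigma>'
    \<Longrightarrow> SDI Psi proj lift R d \<sigma> (\<Gamma> + {#Disj A B#}) \<sigma>'"
| SDI_conj0: "\<lbrakk>SDI Psi proj lift R d \<sigma> (\<Gamma> + {#A0#}) \<sigma>''; SDI Psi proj lift R d \<sigma>'' (\<Gamma> + {#A1#}) \<sigma>'\<rbrakk>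
    \<Longrightarrow> SDI Psi proj lift R d \<sigma> (\<Gamma> + {#Conj A0 A1#}) \<sigma>'"
| SDI_conj1: "\<lbrakk>SDI Psi proj lift R d \<sigma> (\<Gamma> + {#A1#}) \<sigma>''; SDI Psi proj lift R d \<sigma>'' (\<Gamma> + {#A0#}) \<sigma>'\<rbrakk>
    \<Longrightarrow> SDI Psi proj lift R d \<sigma> (\<Gamma> + {#Conj A0 A1#}) \<sigma>'"
| SDI_ex: "\<lbrakk>is_dom d; DM X \<notin> set d; ctx_dom d (\<Gamma> + {#Exists x A#}); \<sigma> \<in> Psi d;
    SDI Psi proj lift R (DM X # d) (lift d X \<sigma>) (\<Gamma> + {#subst_fm x (MVar X) A, Exists x A#}) \<sigma>'\<rbrakk>
    \<Longrightarrow> SDI Psi proj lift R d \<sigma> (\<Gamma> + {#Exists x A#}) (proj d X \<sigma>')"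
| SDI_all: "\<lbrakk>is_dom d; DE y \<notin> set d; ctx_dom d (\<Gamma> + {#Forall x A#});
    SDI Psi proj lift R (DE y # d) \<sigma> (\<Gamma> + {#subst_fm x (EVar y) A#}) \<sigma>'\<rbrakk>
    \<Longrightarrow> SDI Psi proj lift R d \<sigma> (\<Gamma> + {#Forall x A#}) \<sigma>'"

end

theory Submission
  imports Defs
begin

lemma glb_arith:
  assumes refl: "\<forall>x\<in>S. le x x"
    and trans: "\<forall>x\<in>S. \<forall>y\<in>S. \<forall>z\<in>S. le x y \<and> le y z \<longrightarrow> le x z"
    and glb: "\<forall>x\<in>S. \<forall>y\<in>S. le (m x y) x \<and> le (m x y) y \<and> (\<forall>t\<in>S. le t x \<and> le t y \<longrightarrow> le t (m x y))"
    and closed: "\<forall>x\<in>S. \<forall>y\<in>S. m x y \<in> S"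
    and abc: "a \<in> S" "b \<in> S" "c \<in> S"
  shows glb1: "le (m a (m b c)) (m a b)"
    and glb2: "t1 \<in> S \<Longrightarrow> le (m a b) t1 \<Longrightarrow> le (m a (m b c)) (m t1 c)"
    and glb3: "t1 \<in> S \<Longrightarrow> le t1 (m a b) \<Longrightarrow> le (m a b) t1 \<Longrightarrow> t2 \<in> S \<Longrightarrow> le t2 (m t1 c)
       \<Longrightarrow> le (m t1 c) t2 \<Longrightarrow> le t2 (m a (m b c)) \<and> le (m a (m b c)) t2"
proof -
  have S: "m b c \<in> S" "m a b \<in> S" "m a (m b c) \<in> S" using closed abc by auto
  have x1: "le (m a (m b c)) a" "le (m a (m b c)) (m b c)" using glb abc S by auto
  have x2: "le (m b c) b" "le (m b c) c" using glb abc by auto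
  have x3: "le (m a (m b c)) b" "le (m a (m b c)) c" using trans x1 x2 S abc by blast+
  show g1: "le (m a (m b c)) (m a b)" using glb abc S x1 x3 by blast
  show g2: "le (m a (m b c)) (m t1 c)" if "t1 \<in> S" "le (m a b) t1"
  proof -
    have "le (m a (m b c)) t1" using trans g1 that S by blast
    then show ?thesis using glb that S abc x3 by blast
  qed
  assume t1: "t1 \<in> S" "le t1 (m a b)" "le (m a b) t1" and t2: "t2 \<in> S" "le t2 (m t1 c)" "le (m t1 c) t2"
  have S2: "m t1 c \<in> S" using closed t1 abc by auto
  have y1: "le (m t1 c) t1" "le (m t1 c) c" using glb t1 abc by auto
  have y2: "le (m a b) a" "le (m a b) b" using glb abc by auto
  have y3: "le t2 t1" "le t2 c" using trans y1 t2 t1 S2 abc by blast+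
  have y4: "le t2 (m a b)" using trans y3 t1 t2 S by blast
  have y5: "le t2 a" "le t2 b" using trans y4 y2 t2 S abc by blast+
  have y6: "le t2 (m b c)" using glb y5 y3 t2 abc by blast
  have "le t2 (m a (m b c))" using glb y5 y6 t2 abc S by blast
  moreover have "le (m a (m b c)) t2" using g2[OF t1(1) t1(3)] t2 trans S S2 by blast
  ultimately show "le t2 (m a (m b c)) \<and> le (m a (m b c)) t2" by blast
qed

lemma fm_dom_Conj: "fm_dom d A \<Longrightarrow> fm_dom d B \<Longrightarrow> fm_dom d (Conj A B)"
  and fm_dom_Disj: "fm_dom d A \<Longrightarrow> fm_dom d B \<Longrightarrow> fm_dom d (Disj A B)"
  by (auto simp: fm_dom_def)

lemma ctx_dom_add: "ctx_dom d (\<Gamma> + {#X#}) \<longleftrightarrow> ctx_dom d \<Gamma> \<and> fm_dom d X"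
  by (auto simp: ctx_dom_def)

lemma ctx_dom_add2: "ctx_dom d (\<Gamma> + {#X, Y#}) \<longleftrightarrow> ctx_dom d \<Gamma> \<and> fm_dom d X \<and> fm_dom d Y"
  by (auto simp: ctx_dom_def)

lemma ctx_dom_addm: "ctx_dom d (add_mset X \<Gamma>) \<longleftrightarrow> ctx_dom d \<Gamma> \<and> fm_dom d X"
  by (auto simp: ctx_dom_def)

lemma DI_wf:
  assumes ms: "meet_structure Psi proj meet"
  shows "DI Psi proj meet models d \<Gamma> \<sigma> \<Longrightarrow> is_dom d \<and> ctx_dom d \<Gamma> \<and> \<sigma> \<in> Psi d"
proof (induction rule: DI.induct)
  case (DI_ax d \<Gamma> \<sigma>)
  then show ?case by blast
next
  case (DI_conj d \<Gamma> A \<sigma> B \<sigma>')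
  have "meet d \<sigma> \<sigma>' \<in> Psi d" using ms DI_conj unfolding meet_structure_def by blast
  then show ?case using DI_conj by (simp add: ctx_dom_addm fm_dom_Conj)
next
  case (DI_disj d \<Gamma> A B \<sigma>)
  then show ?case by (simp add: ctx_dom_addm fm_dom_Disj)
next
  case (DI_ex d X \<Gamma> x A \<sigma>)
  then show ?case using ms unfolding meet_structure_def constraint_structure_def by blast
next
  case (DI_all d y \<Gamma> x A \<sigma>)
  then show ?case using ms unfolding meet_structure_def constraint_structure_def by blast
qed

lemma lits_dom_ctx: "ctx_dom d \<Gamma> \<Longrightarrow> lits_dom d (lits \<Gamma>)"
  by (auto simp: ctx_dom_def lits_dom_def lits_def)

theorem mainTheorem6:
  fixes Psi :: "decl list \<Rightarrow> 'c set"
    and proj lift :: "decl list \<Rightarrow> nat \<Rightarrow> 'c \<Rightarrow> 'c"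
    and meet :: "decl list \<Rightarrow> 'c \<Rightarrow> 'c \<Rightarrow> 'c"
    and le :: "decl list \<Rightarrow> 'c \<Rightarrow> 'c \<Rightarrow> bool"
    and P :: "decl list \<Rightarrow> 'c \<Rightarrow> bool"
    and R :: "decl list \<Rightarrow> 'c \<Rightarrow> ('f, 'p) lit set \<Rightarrow> 'c \<Rightarrow> bool"
    and models :: "decl list \<Rightarrow> ('f, 'p) lit set \<Rightarrow> 'c \<Rightarrow> bool"
  assumes "meet_structure Psi proj meet"
    and "lift_structure Psi proj lift"
    and "decent Psi proj meet lift le P"
    and "relates Psi meet le P R models"
    and "DI Psi proj meet models d \<Gamma> \<sigma>'"
    and "\<sigma> \<in> Psi d"
    and "P d (meet d \<sigma> \<sigma>')"
  shows "\<exists>\<sigma>''\<in>Psi d. ceq le d \<sigma>'' (meet d \<sigma> \<sigma>') \<and> SDI Psi proj lift R d \<sigma> \<Gamma> \<sigma>''"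
proof -
  note ms = assms(1) and ls = assms(2) and dec = assms(3) and rel = assms(4)
  note dd = dec[unfolded decent_def]
  note dd1 = dd[THEN conjunct1]
  note dd2 = dd[THEN conjunct2, THEN conjunct1]
  note dd3 = dd[THEN conjunct2, THEN conjunct2, THEN conjunct1]
  note dd4 = dd[THEN conjunct2, THEN conjunct2, THEN conjunct2, THEN conjunct1]
  note dd5 = dd[THEN conjunct2, THEN conjunct2, THEN conjunct2, THEN conjunct2, THEN conjunct1]
  note dd6 = dd[THEN conjunct2, THEN conjunct2, THEN conjunct2, THEN conjunct2, THEN conjunct2]
  have pre: "\<And>d. is_dom d \<Longrightarrow> (\<forall>\<sigma>\<in>Psi d. le d \<sigma> \<sigma>) \<and>
        (\<forall>\<sigma>\<in>Psi d. \<forall>\<sigma>'\<in>Psi d. \<forall>\<sigma>''\<in>Psi d. le d \<sigma> \<sigma>' \<and> le d \<sigma>' \<sigma>'' \<longrightarrow> le d \<sigma> \<sigma>'')"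
    using dd1 by blast
  have glb: "\<And>d. is_dom d \<Longrightarrow> \<forall>\<sigma>\<in>Psi d. \<forall>\<sigma>'\<in>Psi d.
        le d (meet d \<sigma> \<sigma>') \<sigma> \<and> le d (meet d \<sigma> \<sigma>') \<sigma>' \<and>
        (\<forall>\<tau>\<in>Psi d. le d \<tau> \<sigma> \<and> le d \<tau> \<sigma>' \<longrightarrow> le d \<tau> (meet d \<sigma> \<sigma>'))"
    using dd3 by blast
  have mcl: "\<And>d. is_dom d \<Longrightarrow> \<forall>\<sigma>\<in>Psi d. \<forall>\<sigma>'\<in>Psi d. meet d \<sigma> \<sigma>' \<in> Psi d"
    using ms unfolding meet_structure_def by blast
  have P2: "\<And>d \<sigma> \<sigma>'. is_dom d \<Longrightarrow> \<sigma>\<in>Psi d \<Longrightarrow> \<sigma>'\<in>Psi d \<Longrightarrow> P d \<sigma> \<Longrightarrow> le d \<sigma> \<sigma>' \<Longrightarrow> P d \<sigma>'"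
    using dd6 by blast
  have P1: "\<And>d X \<sigma>. is_dom d \<Longrightarrow> DM X \<notin> set d \<Longrightarrow> \<sigma>\<in>Psi (DM X # d) \<Longrightarrow>
      P (DM X # d) \<sigma> \<longleftrightarrow> P d (proj d X \<sigma>)"
    using dd5 by blast
  have D2: "\<And>d X \<sigma> \<sigma>' \<sigma>''. is_dom d \<Longrightarrow> DM X \<notin> set d \<Longrightarrow> \<sigma>\<in>Psi d \<Longrightarrow> \<sigma>'\<in>Psi (DM X # d) \<Longrightarrow>
      \<sigma>''\<in>Psi (DM X # d) \<Longrightarrow> ceq le (DM X # d) \<sigma>'' (meet (DM X # d) (lift d X \<sigma>) \<sigma>') \<Longrightarrow>
        ceq le d (proj d X \<sigma>'') (meet d \<sigma> (proj d X \<sigma>'))"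
    using dd4 by blast
  have Eq: "\<And>d x. is_dom d \<Longrightarrow> DE x \<notin> set d \<Longrightarrow>
        (\<forall>\<sigma>\<in>Psi d. \<forall>\<sigma>'\<in>Psi d. le (DE x # d) \<sigma> \<sigma>' = le d \<sigma> \<sigma>') \<and>
        (\<forall>\<sigma>\<in>Psi d. P (DE x # d) \<sigma> = P d \<sigma>)"
    using dd2 by blast
  have PsiE: "\<And>d x. is_dom d \<Longrightarrow> DE x \<notin> set d \<Longrightarrow> Psi (DE x # d) = Psi d"
    using ms unfolding meet_structure_def constraint_structure_def by blast
  have meetE: "\<And>d x. is_dom d \<Longrightarrow> DE x \<notin> set d \<Longrightarrow> \<forall>\<sigma>\<in>Psi d. \<forall>\<sigma>'\<in>Psi d. meet (DE x # d) \<sigma> \<sigma>' = meet d \<sigma> \<sigma>'"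
    using ms unfolding meet_structure_def by blast
  have projM: "\<And>d X \<sigma>. is_dom d \<Longrightarrow> DM X \<notin> set d \<Longrightarrow> \<sigma> \<in> Psi (DM X # d) \<Longrightarrow> proj d X \<sigma> \<in> Psi d"
    using ms unfolding meet_structure_def constraint_structure_def by blast
  have liftM: "\<And>d X \<sigma>. is_dom d \<Longrightarrow> DM X \<notin> set d \<Longrightarrow> \<sigma> \<in> Psi d \<Longrightarrow> lift d X \<sigma> \<in> Psi (DM X # d)"
    using ls unfolding lift_structure_def by blast
  have A2: "\<And>d \<A> \<sigma> \<sigma>'. is_dom d \<Longrightarrow> lits_dom d \<A> \<Longrightarrow> \<sigma> \<in> Psi d \<Longrightarrow> \<sigma>'\<in>Psi d \<Longrightarrow>
      P d (meet d \<sigma> \<sigma>') \<Longrightarrow> models d \<A> \<sigma>' \<Longrightarrow>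
           (\<exists>\<sigma>''\<in>Psi d. ceq le d \<sigma>'' (meet d \<sigma> \<sigma>') \<and> R d \<sigma> \<A> \<sigma>'')"
    using rel unfolding relates_def by blast
  show ?thesis
  using assms(5,6,7)
  proof (induction arbitrary: \<sigma> rule: DI.induct)
    case (DI_ax d \<Gamma> \<sigma>' \<sigma>)
    then obtain \<sigma>'' where "\<sigma>''\<in>Psi d" "ceq le d \<sigma>'' (meet d \<sigma> \<sigma>')" "R d \<sigma> (lits \<Gamma>) \<sigma>''"
      using A2[of d "lits \<Gamma>" \<sigma> \<sigma>'] lits_dom_ctx by blast
    then show ?case using DI_ax by (blast intro: SDI.SDI_ax)
  next
    case (DI_conj d \<Gamma> A \<sigma>1 B \<sigma>2 \<sigma>)
    have w1: "is_dom d" "\<sigma>1 \<in> Psi d" using DI_wf[OF ms DI_conj.hyps(1)] by auto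
    have w2: "\<sigma>2 \<in> Psi d" using DI_wf[OF ms DI_conj.hyps(2)] by auto
    note pd = pre[OF w1(1)] and gd = glb[OF w1(1)] and md = mcl[OF w1(1)]
    have S: "meet d \<sigma> \<sigma>1 \<in> Psi d" "meet d \<sigma>1 \<sigma>2 \<in> Psi d" "meet d \<sigma> (meet d \<sigma>1 \<sigma>2) \<in> Psi d"
      using md w1 w2 DI_conj.prems(1) by auto
    have "le d (meet d \<sigma> (meet d \<sigma>1 \<sigma>2)) (meet d \<sigma> \<sigma>1)"
      using glb1[of "Psi d" "le d" "meet d", OF _ _ _ _ DI_conj.prems(1) w1(2) w2] pd gd md by blast
    then have "P d (meet d \<sigma> \<sigma>1)" using P2[OF w1(1)] S DI_conj.prems(2) by blast
    then obtain t1 where t1: "t1 \<in> Psi d" "ceq le d t1 (meet d \<sigma> \<sigma>1)" "SDI Psi proj lift R d \<sigma> (\<Gamma> + {#A#}) t1"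
      using DI_conj.IH(1)[OF DI_conj.prems(1)] by blast
    have "le d (meet d \<sigma> (meet d \<sigma>1 \<sigma>2)) (meet d t1 \<sigma>2)"
      using glb2[of "Psi d" "le d" "meet d", OF _ _ _ _ DI_conj.prems(1) w1(2) w2 t1(1)] pd gd md t1(2)
      unfolding ceq_def by blast
    then have "P d (meet d t1 \<sigma>2)" using P2[OF w1(1)] S md t1(1) w2 DI_conj.prems(2) by blast
    then obtain t2 where t2: "t2 \<in> Psi d" "ceq le d t2 (meet d t1 \<sigma>2)" "SDI Psi proj lift R d t1 (\<Gamma> + {#B#}) t2"
      using DI_conj.IH(2)[OF t1(1)] by blast
    have "ceq le d t2 (meet d \<sigma> (meet d \<sigma>1 \<sigma>2))"
      using glb3[of "Psi d" "le d" "meet d", OF _ _ _ _ DI_conj.prems(1) w1(2) w2 t1(1) _ _ t2(1)] pd gd md t1(2) t2(2)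
      unfolding ceq_def by blast
    then show ?case using t2 t1 by (blast intro: SDI.SDI_conj0)
  next
    case (DI_disj d \<Gamma> A B \<sigma>1 \<sigma>)
    then show ?case by (blast intro: SDI.SDI_disj)
  next
    case (DI_ex d X \<Gamma> x A \<sigma>1 \<sigma>)
    have w: "\<sigma>1 \<in> Psi (DM X # d)" using DI_wf[OF ms DI_ex(4)] by auto
    have dX: "is_dom (DM X # d)" using DI_ex(1,2) by (simp add: is_dom_def)
    have l: "lift d X \<sigma> \<in> Psi (DM X # d)" using liftM DI_ex(1,2,6) by blast
    have m: "meet (DM X # d) (lift d X \<sigma>) \<sigma>1 \<in> Psi (DM X # d)" using mcl[OF dX] l w by blast
    have c: "ceq le d (proj d X (meet (DM X # d) (lift d X \<sigma>) \<sigma>1)) (meet d \<sigma> (proj d X \<sigma>1))"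
      using D2[OF DI_ex(1,2,6) w m] pre[OF dX] m unfolding ceq_def by blast
    have "P d (proj d X (meet (DM X # d) (lift d X \<sigma>) \<sigma>1))"
      using P2[OF DI_ex(1)] c projM[OF DI_ex(1,2)] m mcl[OF DI_ex(1)] DI_ex(6,7) w
      unfolding ceq_def by blast
    then have "P (DM X # d) (meet (DM X # d) (lift d X \<sigma>) \<sigma>1)" using P1[OF DI_ex(1,2) m] by blast
    then obtain t where t: "t \<in> Psi (DM X # d)" "ceq le (DM X # d) t (meet (DM X # d) (lift d X \<sigma>) \<sigma>1)"
      "SDI Psi proj lift R (DM X # d) (lift d X \<sigma>) (\<Gamma> + {#subst_fm x (MVar X) A, Exists x A#}) t"
      using DI_ex(5)[OF l] by blast
    have "ceq le d (proj d X t) (meet d \<sigma> (proj d X \<sigma>1))" using D2[OF DI_ex(1,2,6) w t(1,2)] .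
    moreover have "SDI Psi proj lift R d \<sigma> (\<Gamma> + {#Exists x A#}) (proj d X t)"
      using SDI.SDI_ex[OF DI_ex(1,2,3,6) t(3)] .
    ultimately show ?case using projM[OF DI_ex(1,2) t(1)] by blast
  next
    case (DI_all d y \<Gamma> x A \<sigma>1 \<sigma>)
    have ps: "Psi (DE y # d) = Psi d" using PsiE DI_all(1,2) by blast
    have w: "\<sigma>1 \<in> Psi d" using DI_wf[OF ms DI_all(4)] ps by auto
    have me: "meet (DE y # d) \<sigma> \<sigma>1 = meet d \<sigma> \<sigma>1" using meetE[OF DI_all(1,2)] w DI_all(6) by blast
    have mP: "meet d \<sigma> \<sigma>1 \<in> Psi d" using mcl[OF DI_all(1)] w DI_all(6) by blast
    have "P (DE y # d) (meet (DE y # d) \<sigma> \<sigma>1)" using Eq[OF DI_all(1,2)] me mP DI_all(7) by simp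
    then obtain t where t: "t \<in> Psi d" "ceq le (DE y # d) t (meet (DE y # d) \<sigma> \<sigma>1)"
      "SDI Psi proj lift R (DE y # d) \<sigma> (\<Gamma> + {#subst_fm x (EVar y) A#}) t"
      using DI_all(5)[of \<sigma>] DI_all(6) ps by blast
    have "ceq le d t (meet d \<sigma> \<sigma>1)" using t(2) me Eq[OF DI_all(1,2)] t(1) mP unfolding ceq_def by simp
    then show ?case using t SDI.SDI_all[OF DI_all(1,2,3) t(3)] by blast
  qed
qed

end
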